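(* \[\sum_{\pi\in\mathcal{C}_1}q^{|\pi|}=\sum_{m\ge0}\frac{q^{\binom{m+1}{2}}}{(q;q)_m}\sum_{j\ge0}q^{\binom{j+1}{2}}{m\brack j}.\]
   Context: An overpartition is a partition in which the first occurrence of each part size may be overlined, with parts listed in non-increasing order with respect to $1<\bar1<2<\bar2<\cdots$. A part is of size $t$ if it is $t$ or $\bar t$, and $|\pi|$ is the sum of the sizes of the parts. $\mathcal{C}_1$ is the set of overpartitions $(\pi_1,\dots,\pi_\ell)$, including the empty one, such that: - for each $1\le i<\ell$, the size of $\pi_i$ minus the size of $\pi_{i+1}$ is at least $1$, and at least $2$ if $\pi_i$ is non-overlined; - no part equals the non-overlined part $1$ (the part $\bar1$ is allowed). $(q;q)_n=\prod_{i=1}^n(1-q^i)$. The Gaussian binomial is ${M\brack N}=\frac{(q;q)_M}{(q;q)_N(q;q)_{M-N}}$ for $0\le N\le M$ and $0$ otherwise. *)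

theory Defs
  imports "HOL-Computational_Algebra.Formal_Power_Series"
begin

text \<open>A part of an overpartition is a pair (t, b): its size t and whether it is overlined (b = True).\<close>
type_synonym opart = "nat \<times> bool"

text \<open>Rank of a part in the order 1 < 1bar < 2 < 2bar < ...\<close>
definition part_rank :: "opart \<Rightarrow> nat" where
  "part_rank p = 2 * fst p + (if snd p then 1 else 0)"

definition is_overpartition :: "opart list \<Rightarrow> bool" where
  "is_overpartition \<pi> \<longleftrightarrow>
     (\<forall>p\<in>set \<pi>. fst p \<ge> 1) \<and>
     sorted_wrt (\<lambda>p p'. part_rank p' \<le> part_rank p) \<pi> \<and>
     (\<forall>i<length \<pi>. \<forall>j<length \<pi>. i < j \<and> fst (\<pi>!i) = fst (\<pi>!j) \<longrightarrow> \<not> snd (\<pi>!j))"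

definition op_weight :: "opart list \<Rightarrow> nat" where
  "op_weight \<pi> = (\<Sum>p\<leftarrow>\<pi>. fst p)"

definition C1 :: "opart list set" where
  "C1 = {\<pi>. is_overpartition \<pi> \<and>
            (\<forall>i. i + 1 < length \<pi> \<longrightarrow>
               int (fst (\<pi>!i)) - int (fst (\<pi>!(i+1))) \<ge> (if snd (\<pi>!i) then 1 else 2)) \<and>
            (1, False) \<notin> set \<pi>}"

text \<open>(q;q)_n as a formal power series in q = fps_X.\<close>
definition qpoch :: "nat \<Rightarrow> rat fps" where
  "qpoch n = (\<Prod>i=1..n. 1 - fps_X ^ i)"

definition qbinom :: "nat \<Rightarrow> nat \<Rightarrow> rat fps" where
  "qbinom M N = (if N \<le> M then qpoch M / (qpoch N * qpoch (M - N)) else 0)"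

end

theory Submission
  imports Defs
begin

definition bit :: "opart \<Rightarrow> nat" where "bit x = (if snd x then 1 else 0)"

fun okf :: "opart list \<Rightarrow> bool" where
  "okf [] = True"
| "okf [x] = (2 \<le> fst x + bit x)"
| "okf (x#y#r) = (fst y + 2 \<le> fst x + bit x \<and> okf (y#r))"

fun okr :: "nat \<Rightarrow> opart list \<Rightarrow> bool" where
  "okr c [] = True"
| "okr c (x#r) = (c + 2 \<le> fst x + bit x \<and> okr (fst x) r)"

lemma bit_le: "bit x \<le> 1" by (simp add: bit_def)

lemma okf_set: "okf \<pi> \<Longrightarrow> p \<in> set \<pi> \<Longrightarrow> 2 \<le> fst p + bit p"
  by (induction \<pi> rule: okf.induct) (auto simp: bit_def split: if_splits)

lemma okf_mono0: "okf \<pi> \<Longrightarrow> 0 < j \<Longrightarrow> j < length \<pi> \<Longrightarrow> fst (\<pi>!j) < fst (\<pi>!0)"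
proof (induction \<pi> arbitrary: j rule: okf.induct)
  case (3 x y r)
  show ?case
  proof (cases "j = 1")
    case True then show ?thesis using 3 bit_le[of x] by simp
  next
    case False
    then obtain j' where j': "j = Suc j'" "0 < j'" using 3 by (cases j) auto
    have "fst ((y#r)!j') < fst y" using 3 j' by auto
    moreover have "fst y < fst x" using 3 bit_le[of x] by simp
    moreover have "(x#y#r)!j = (y#r)!j'" using j' by simp
    ultimately show ?thesis by simp
  qed
qed auto

lemma okf_tl: "okf (x#r) \<Longrightarrow> okf r"
  by (cases r) auto

lemma okf_mono: "okf \<pi> \<Longrightarrow> i < j \<Longrightarrow> j < length \<pi> \<Longrightarrow> fst (\<pi>!j) < fst (\<pi>!i)"
proof (induction \<pi> arbitrary: i j)
  case (Cons x r)
  show ?case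
  proof (cases i)
    case 0 then show ?thesis using okf_mono0[OF Cons.prems(1)] Cons.prems by simp
  next
    case (Suc i')
    then obtain j' where "j = Suc j'" using Cons.prems by (cases j) auto
    then show ?thesis using Cons.IH[OF okf_tl[OF Cons.prems(1)], of i' j'] Cons.prems Suc by simp
  qed
qed simp

lemma okf_idx: "okf \<pi> \<longleftrightarrow> (\<forall>i. i+1 < length \<pi> \<longrightarrow> fst (\<pi>!(i+1)) + 2 \<le> fst (\<pi>!i) + bit (\<pi>!i))
     \<and> (\<pi> \<noteq> [] \<longrightarrow> 2 \<le> fst (last \<pi>) + bit (last \<pi>))"
proof (induction \<pi> rule: okf.induct)
  case (3 x y r)
  have e: "(\<forall>i. P i) \<longleftrightarrow> P 0 \<and> (\<forall>i. P (Suc i))" for P :: "nat \<Rightarrow> bool"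
    by (metis not0_implies_Suc)
  show ?case unfolding okf.simps 3 by (subst e) auto
qed auto

lemma C1_okf: "\<pi> \<in> C1 \<longleftrightarrow> okf \<pi>"
proof
  assume A: "\<pi> \<in> C1"
  have "fst (\<pi>!(i+1)) + 2 \<le> fst (\<pi>!i) + bit (\<pi>!i)" if "i+1 < length \<pi>" for i
    using A that unfolding C1_def by (auto simp: bit_def split: if_splits)
  moreover have "2 \<le> fst (last \<pi>) + bit (last \<pi>)" if "\<pi> \<noteq> []"
  proof -
    have "last \<pi> \<in> set \<pi>" using that by simp
    then have "fst (last \<pi>) \<ge> 1" "last \<pi> \<noteq> (1, False)" using A unfolding C1_def is_overpartition_def by auto
    then show ?thesis by (cases "last \<pi>") (auto simp: bit_def)
  qed
  ultimately show "okf \<pi>" by (simp add: okf_idx)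
next
  assume A: "okf \<pi>"
  have s: "2 \<le> fst p + bit p" if "p \<in> set \<pi>" for p using okf_set[OF A that] .
  have "is_overpartition \<pi>"
    unfolding is_overpartition_def
  proof (intro conjI ballI allI impI)
    fix p assume "p \<in> set \<pi>" then show "1 \<le> fst p" using s[of p] bit_le[of p] by simp
  next
    show "sorted_wrt (\<lambda>p p'. part_rank p' \<le> part_rank p) \<pi>"
      unfolding sorted_wrt_iff_nth_less
      using okf_mono[OF A] by (force simp: part_rank_def)
  next
    fix i j assume "i < length \<pi>" "j < length \<pi>" "i < j \<and> fst (\<pi> ! i) = fst (\<pi> ! j)"
    then show "\<not> snd (\<pi> ! j)" using okf_mono[OF A, of i j] by simp
  qed
  moreover have "(1, False) \<notin> set \<pi>" using s[of "(1,False)"] by (auto simp: bit_def)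
  moreover have "int (fst (\<pi>!i)) - int (fst (\<pi>!(i+1))) \<ge> (if snd (\<pi>!i) then 1 else 2)" if "i + 1 < length \<pi>" for i
    using A that unfolding okf_idx by (auto simp: bit_def split: if_splits)
  ultimately show "\<pi> \<in> C1" unfolding C1_def by auto
qed

lemma okr_snoc: "okr c (xs @ [x]) \<longleftrightarrow> okr c xs \<and> (if xs = [] then c else fst (last xs)) + 2 \<le> fst x + bit x"
  by (induction xs arbitrary: c) auto

lemma okf_okr: "okf \<pi> \<longleftrightarrow> okr 0 (rev \<pi>)"
proof (induction \<pi> rule: okf.induct)
  case (3 x y r)
  have "rev (x#y#r) = rev (y#r) @ [x]" by simp
  moreover have "last (rev (y#r)) = y" by simp
  ultimately show ?case using 3 by (simp only: okr_snoc okf.simps) auto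
qed auto


definition wt :: "opart list \<Rightarrow> nat" where "wt \<rho> = sum_list (map fst \<rho>)"
definition S :: "nat \<Rightarrow> nat \<Rightarrow> nat \<Rightarrow> opart list set" where
  "S l c n = {\<rho>. okr c \<rho> \<and> length \<rho> = l \<and> wt \<rho> = n}"
definition G :: "nat \<Rightarrow> nat \<Rightarrow> rat fps" where
  "G l c = Abs_fps (\<lambda>n. of_nat (card (S l c n)))"

lemma finite_S: "finite (S l c n)"
proof -
  have "S l c n \<subseteq> {xs. set xs \<subseteq> {0..n} \<times> UNIV \<and> length xs = l}"
  proof
    fix \<rho> assume "\<rho> \<in> S l c n"
    then have "wt \<rho> = n" "length \<rho> = l" by (auto simp: S_def)
    moreover have "fst x \<le> wt \<rho>" if "x \<in> set \<rho>" for x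
      unfolding wt_def using that by (simp add: member_le_sum_list)
    ultimately show "\<rho> \<in> {xs. set xs \<subseteq> {0..n} \<times> UNIV \<and> length xs = l}" by force
  qed
  moreover have "finite {xs. set xs \<subseteq> {0..n} \<times> (UNIV::bool set) \<and> length xs = l}"
    by (rule finite_lists_length_eq) simp
  ultimately show ?thesis by (rule finite_subset)
qed

lemma okr_gt: "okr c \<rho> \<Longrightarrow> x \<in> set \<rho> \<Longrightarrow> c < fst x"
proof (induction \<rho> arbitrary: c)
  case (Cons y r)
  then show ?case using bit_le[of y] by (auto dest: Cons.IH)
qed simp

definition inc :: "opart \<Rightarrow> opart" where "inc x = (Suc (fst x), snd x)"
definition dec :: "opart \<Rightarrow> opart" where "dec x = (fst x - 1, snd x)"

lemma wt0: "\<forall>x\<in>set xs. fst x = 0 \<Longrightarrow> sum_list (map fst xs) = (0::nat)"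
  by (induction xs) auto

lemma okr_mono: "okr (Suc c) x \<Longrightarrow> okr c x"
  by (cases x) auto

lemma okr_inc: "okr (Suc c) (map inc \<rho>) \<longleftrightarrow> okr c \<rho>"
  by (induction \<rho> arbitrary: c) (auto simp: inc_def bit_def)

lemma wt_inc: "wt (map inc \<rho>) = wt \<rho> + length \<rho>"
  by (induction \<rho>) (auto simp: wt_def inc_def)

lemma inc_dec: "okr (Suc c) \<rho> \<Longrightarrow> map inc (map dec \<rho>) = \<rho>"
proof -
  assume "okr (Suc c) \<rho>"
  then have "\<forall>x\<in>set \<rho>. 0 < fst x" using okr_gt by fastforce
  then show ?thesis by (induction \<rho>) (auto simp: inc_def dec_def)
qed

lemma card_S_shift: "card (S l (Suc c) n) = (if l \<le> n then card (S l c (n - l)) else 0)"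
proof -
  have sub: "S l (Suc c) n \<subseteq> map inc ` S l c (n - l) \<and> (S l (Suc c) n \<noteq> {} \<longrightarrow> l \<le> n)"
  proof (intro conjI impI subsetI)
    fix \<rho> assume "\<rho> \<in> S l (Suc c) n"
    then have A: "okr (Suc c) \<rho>" "length \<rho> = l" "wt \<rho> = n" by (auto simp: S_def)
    have e: "map inc (map dec \<rho>) = \<rho>" using inc_dec[OF A(1)] .
    then have "okr c (map dec \<rho>)" using A(1) okr_inc by metis
    moreover have "wt (map dec \<rho>) + l = n" using wt_inc[of "map dec \<rho>"] e A by simp
    ultimately show "\<rho> \<in> map inc ` S l c (n - l)"
      using A e by (intro image_eqI[of _ _ "map dec \<rho>"]) (auto simp: S_def)
  next
    assume "S l (Suc c) n \<noteq> {}"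
    then obtain \<rho> where "\<rho> \<in> S l (Suc c) n" by blast
    then have A: "okr (Suc c) \<rho>" "length \<rho> = l" "wt \<rho> = n" by (auto simp: S_def)
    have e: "map inc (map dec \<rho>) = \<rho>" using inc_dec[OF A(1)] .
    show "l \<le> n" using wt_inc[of "map dec \<rho>"] e A by simp
  qed
  have sup: "l \<le> n \<Longrightarrow> map inc ` S l c (n - l) \<subseteq> S l (Suc c) n"
    by (auto simp: S_def okr_inc wt_inc)
  have inj: "inj (map inc)" by (rule inj_mapI) (auto simp: inj_def inc_def)
  show ?thesis
  proof (cases "l \<le> n")
    case True
    then have "S l (Suc c) n = map inc ` S l c (n - l)" using sub sup by blast
    then show ?thesis using True card_image[OF inj_on_subset[OF inj subset_UNIV]] by simp
  next
    case False then show ?thesis using sub by auto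
  qed
qed

lemma S_Suc_eq: "S (Suc l) c n = S (Suc l) (Suc c) n \<union>
   ((if Suc c \<le> n then Cons (Suc c, True) ` S l (Suc c) (n - Suc c) else {}) \<union>
    (if c+2 \<le> n then Cons (c+2, False) ` S l (c+2) (n - (c+2)) else {}))"
  (is "?L = ?A \<union> (?B \<union> ?C)")
proof
  show "?L \<subseteq> ?A \<union> (?B \<union> ?C)"
  proof
    fix \<rho> assume "\<rho> \<in> ?L"
    then obtain x r where r: "\<rho> = x # r" "okr c (x#r)" "length r = l" "wt (x#r) = n"
      by (cases \<rho>) (auto simp: S_def)
    have w: "wt (x#r) = fst x + wt r" by (simp add: wt_def)
    show "\<rho> \<in> ?A \<union> (?B \<union> ?C)"
    proof (cases "c + 3 \<le> fst x + bit x")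
      case True then show ?thesis using r by (auto simp: S_def)
    next
      case False
      then have "x = (Suc c, True) \<or> x = (c+2, False)" using r(2) by (cases x) (auto simp: bit_def split: if_splits)
      then show ?thesis using r w by (auto simp: S_def)
    qed
  qed
next
  show "?A \<union> (?B \<union> ?C) \<subseteq> ?L"
    by (auto simp: S_def wt_def bit_def okr_mono wt0 split: if_splits)
qed

lemma card_S_Suc: "card (S (Suc l) c n) = card (S (Suc l) (Suc c) n) +
   ((if Suc c \<le> n then card (S l (Suc c) (n - Suc c)) else 0) +
    (if c+2 \<le> n then card (S l (c+2) (n - (c+2))) else 0))"
proof -
  let ?A = "S (Suc l) (Suc c) n"
  let ?B = "(if Suc c \<le> n then Cons (Suc c, True) ` S l (Suc c) (n - Suc c) else {})"
  let ?C = "(if c+2 \<le> n then Cons (c+2, False) ` S l (c+2) (n - (c+2)) else {})"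
  have fB: "finite ?B" and fC: "finite ?C" using finite_S by auto
  have d1: "?B \<inter> ?C = {}" by auto
  have d2: "?A \<inter> (?B \<union> ?C) = {}" by (auto simp: S_def bit_def)
  have cB: "card ?B = (if Suc c \<le> n then card (S l (Suc c) (n - Suc c)) else 0)"
    by (simp add: card_image)
  have cC: "card ?C = (if c+2 \<le> n then card (S l (c+2) (n - (c+2))) else 0)"
    by (simp add: card_image)
  show ?thesis
    unfolding S_Suc_eq[of l c n]
    by (subst card_Un_disjoint[OF finite_S _ d2]) (use fB fC d1 cB cC in \<open>simp_all add: card_Un_disjoint\<close>)
qed

lemma S0: "S 0 c n = (if n = 0 then {[]} else {})"
  by (auto simp: S_def wt_def)

lemma G0: "G 0 c = 1"
  by (rule fps_ext) (simp add: G_def S0)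

lemma G_shift: "G l (Suc c) = fps_X ^ l * G l c"
  by (rule fps_ext) (simp add: G_def card_S_shift fps_X_power_mult_nth not_le)

lemma G_step: "G (Suc l) c = G (Suc l) (Suc c) + fps_X ^ (Suc c) * G l (Suc c) + fps_X ^ (c+2) * G l (c+2)"
  apply (rule fps_ext)
  apply (simp only: fps_add_nth fps_X_power_mult_nth G_def fps_nth_Abs_fps card_S_Suc[of l c])
  apply (auto simp: not_le)
  done

lemma G_rec: "G (Suc l) 0 * (1 - fps_X ^ Suc l) = (fps_X ^ Suc l + fps_X ^ (2 * Suc l)) * G l 0"
proof -
  have a: "G l (Suc 0) = fps_X ^ l * G l 0" using G_shift[of l 0] by simp
  have b: "G l (Suc (Suc 0)) = fps_X ^ (2*l) * G l 0" using G_shift[of l "Suc 0"] a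
    by (simp add: power_add mult_2)
  have "G (Suc l) 0 = fps_X ^ Suc l * G (Suc l) 0 + fps_X ^ 1 * G l (Suc 0) + fps_X ^ 2 * G l (Suc (Suc 0))"
    using G_step[of l 0] G_shift[of "Suc l" 0] by (simp del: power_Suc add: numeral_2_eq_2)
  also have "\<dots> = fps_X ^ Suc l * G (Suc l) 0 + (fps_X ^ Suc l + fps_X ^ (2 * Suc l)) * G l 0"
    unfolding a b by (simp add: algebra_simps power_add[symmetric])
  finally show ?thesis by (simp add: algebra_simps)
qed


lemma qpoch_0: "qpoch 0 = 1" by (simp add: qpoch_def)

lemma qpoch_Suc: "qpoch (Suc n) = qpoch n * (1 - fps_X ^ Suc n)"
  by (simp add: qpoch_def prod.nat_ivl_Suc' mult.commute)

lemma qpoch_nth0: "fps_nth (qpoch n) 0 = 1"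
  by (induction n) (simp_all add: qpoch_0 qpoch_Suc)

lemma qpoch_unit: "is_unit (qpoch n)"
  by (simp add: qpoch_nth0)

lemma qpoch_nz: "qpoch n \<noteq> 0"
  using qpoch_unit[of n] by auto

lemma unit_prod2: "is_unit (qpoch a * qpoch b)"
  using qpoch_unit by (simp add: is_unit_mult_iff)

lemma qbinom_eq: "j \<le> m \<Longrightarrow> qbinom m j * (qpoch j * qpoch (m - j)) = qpoch m"
proof -
  assume "j \<le> m"
  have "qpoch m = qpoch m / (qpoch j * qpoch (m - j)) * (qpoch j * qpoch (m - j))"
    using unit_eq_div1[OF unit_prod2[of j "m-j"], of "qpoch m" "qpoch m / (qpoch j * qpoch (m-j))"] by simp
  then show ?thesis using \<open>j \<le> m\<close> by (simp add: qbinom_def)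
qed

lemma qbinom_gt: "m < j \<Longrightarrow> qbinom m j = 0" by (simp add: qbinom_def)

lemma qbinom_diag: "qbinom m m = 1"
  by (simp add: qbinom_def qpoch_0 qpoch_nz)

lemma qbinom_0: "qbinom m 0 = 1"
  by (simp add: qbinom_def qpoch_0 qpoch_nz)

lemma qpascal: "j \<le> m \<Longrightarrow> qbinom (Suc m) (Suc j) = qbinom m (Suc j) + fps_X ^ (m - j) * qbinom m j"
proof (cases "j = m")
  case True then show ?thesis by (simp add: qbinom_diag qbinom_gt)
next
  case False
  assume jm: "j \<le> m"
  with False have jm': "j < m" by simp
  define D where "D = qpoch (Suc j) * qpoch (m - j)"
  obtain k where k: "m - j = Suc k" "m - Suc j = k" using jm' by (metis Suc_diff_Suc diff_Suc_Suc)
  have D1: "D = qpoch (Suc j) * qpoch (m - Suc j) * (1 - fps_X ^ (m-j))"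
    unfolding D_def k qpoch_Suc by (simp add: algebra_simps)
  have D2: "D = qpoch j * qpoch (m - j) * (1 - fps_X ^ Suc j)"
    unfolding D_def qpoch_Suc by (simp add: algebra_simps)
  have l: "qbinom (Suc m) (Suc j) * D = qpoch (Suc m)"
    using qbinom_eq[of "Suc j" "Suc m"] jm by (simp add: D_def)
  have r1: "qbinom m (Suc j) * D = qpoch m * (1 - fps_X ^ (m-j))"
    unfolding D1 using qbinom_eq[of "Suc j" m] jm' by (simp add: mult.assoc[symmetric])
  have r2: "fps_X ^ (m - j) * qbinom m j * D = fps_X ^ (m - j) * qpoch m * (1 - fps_X ^ Suc j)"
    unfolding D2 using qbinom_eq[of j m] jm by (simp add: mult.assoc[symmetric])
  have pw: "fps_X ^ (m - j) * fps_X ^ Suc j = (fps_X ^ Suc m :: rat fps)"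
    using jm by (simp add: power_add[symmetric])
  have "(qbinom m (Suc j) + fps_X ^ (m - j) * qbinom m j) * D = qpoch (Suc m)"
    unfolding distrib_right r1 r2 qpoch_Suc
    using pw by (simp add: algebra_simps)
  with l have "qbinom (Suc m) (Suc j) * D = (qbinom m (Suc j) + fps_X ^ (m - j) * qbinom m j) * D" by simp
  moreover have "D \<noteq> 0" unfolding D_def using qpoch_nz by simp
  ultimately show ?thesis by simp
qed

lemma ch1[simp]: "Suc 0 choose 2 = 0" by (simp add: numeral_2_eq_2)

lemma tri: "(Suc (Suc j) choose 2) = (Suc j choose 2) + Suc j"
  by (simp add: numeral_2_eq_2)

definition P :: "nat \<Rightarrow> rat fps" where "P m = (\<Prod>k=1..m. 1 + fps_X ^ k)"

lemma P_Suc: "P (Suc m) = P m * (1 + fps_X ^ Suc m)"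
  by (simp add: P_def prod.nat_ivl_Suc' mult.commute)

lemma qbin_thm: "(\<Sum>j\<le>m. fps_X ^ ((j+1) choose 2) * qbinom m j) = P m"
proof (induction m)
  case 0 then show ?case by (simp add: P_def qbinom_0)
next
  case (Suc m)
  define f where "f = (\<lambda>j. fps_X ^ ((j+1) choose 2) * qbinom m j)"
  have IH: "sum f {..m} = P m" using Suc by (simp add: f_def)
  have S1: "sum f {..Suc m} = f 0 + (\<Sum>j\<le>m. f (Suc j))"
    by (rule sum.atMost_Suc_shift)
  have S2: "sum f {..Suc m} = sum f {..m}"
    by (simp add: f_def qbinom_gt)
  have f0: "f 0 = 1" by (simp add: f_def qbinom_0)
  have A0: "1 + (\<Sum>j\<le>m. f (Suc j)) = P m" using S1 S2 IH f0 by simp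
  have A': "(\<Sum>j\<le>m. f (Suc j)) = P m - 1" unfolding A0[symmetric] by simp
  have B: "(\<Sum>j\<le>m. fps_X ^ ((Suc j + 1) choose 2) * (fps_X ^ (m - j) * qbinom m j)) = fps_X ^ Suc m * P m"
  proof -
    have "(\<Sum>j\<le>m. fps_X ^ ((Suc j + 1) choose 2) * (fps_X ^ (m - j) * qbinom m j)) =
          (\<Sum>j\<le>m. fps_X ^ Suc m * f j)"
    proof (rule sum.cong)
      fix j assume "j \<in> {..m}"
      then have eq: "((Suc j + 1) choose 2) + (m - j) = Suc m + ((j+1) choose 2)" using tri[of j] by simp
      then have eq2: "fps_X ^ ((Suc j + 1) choose 2) * fps_X ^ (m - j) = (fps_X ^ Suc m * fps_X ^ ((j+1) choose 2) :: rat fps)"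
        by (simp only: power_add[symmetric] eq)
      then show "fps_X ^ ((Suc j + 1) choose 2) * (fps_X ^ (m - j) * qbinom m j) = fps_X ^ Suc m * f j"
        unfolding f_def by (simp only: mult.assoc[symmetric] eq2)
    qed simp
    also have "\<dots> = fps_X ^ Suc m * P m" using IH by (simp only: sum_distrib_left[symmetric])
    finally show ?thesis .
  qed
  define g where "g = (\<lambda>j. fps_X ^ ((j+1) choose 2) * qbinom (Suc m) j)"
  have g0: "g 0 = 1" by (simp add: g_def qbinom_0)
  have "(\<Sum>j\<le>m. g (Suc j)) = (\<Sum>j\<le>m. f (Suc j) + fps_X ^ ((Suc j + 1) choose 2) * (fps_X ^ (m - j) * qbinom m j))"
  proof (rule sum.cong)
    fix j assume "j \<in> {..m}"
    then have "j \<le> m" by simp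
    show "g (Suc j) = f (Suc j) + fps_X ^ ((Suc j + 1) choose 2) * (fps_X ^ (m - j) * qbinom m j)"
      unfolding g_def f_def qpascal[OF \<open>j \<le> m\<close>] by (simp only: distrib_left)
  qed simp
  also have "\<dots> = (P m - 1) + fps_X ^ Suc m * P m"
    by (simp only: sum.distrib A' B)
  finally have C: "(\<Sum>j\<le>m. g (Suc j)) = (P m - 1) + fps_X ^ Suc m * P m" .
  have "sum g {..Suc m} = g 0 + (\<Sum>j\<le>m. g (Suc j))" by (rule sum.atMost_Suc_shift)
  also have "\<dots> = P (Suc m)" unfolding g0 C P_Suc by (simp add: distrib_left mult.commute)
  finally show ?case by (simp only: g_def)
qed

lemma G_closed: "G m 0 * qpoch m = fps_X ^ ((m+1) choose 2) * P m"
proof (induction m)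
  case 0 then show ?case by (simp add: G0 qpoch_0 P_def)
next
  case (Suc m)
  have "G (Suc m) 0 * qpoch (Suc m) = (G (Suc m) 0 * (1 - fps_X ^ Suc m)) * qpoch m"
    by (simp only: qpoch_Suc mult.assoc mult.commute[of "1 - fps_X ^ Suc m"])
  also have "\<dots> = (fps_X ^ Suc m + fps_X ^ (2 * Suc m)) * (G m 0 * qpoch m)"
    by (simp only: G_rec mult.assoc)
  also have "\<dots> = (fps_X ^ Suc m + fps_X ^ (2 * Suc m)) * (fps_X ^ ((m+1) choose 2) * P m)"
    by (simp only: Suc)
  also have "\<dots> = fps_X ^ ((Suc m + 1) choose 2) * P (Suc m)"
  proof -
    have e1: "fps_X ^ (2 * Suc m) = (fps_X ^ Suc m * fps_X ^ Suc m :: rat fps)"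
      by (simp only: mult_2 power_add)
    have e2: "fps_X ^ ((Suc m + 1) choose 2) = (fps_X ^ ((m+1) choose 2) * fps_X ^ Suc m :: rat fps)"
      using tri[of m] by (simp only: Suc_eq_plus1[symmetric] power_add)
    show ?thesis unfolding e1 e2 P_Suc by (simp only: ring_distribs mult_1_right mult_1_left mult_ac)
  qed
  finally show ?case .
qed

lemma term_eq: "fps_X ^ ((m+1) choose 2) / qpoch m * (\<Sum>j\<le>m. fps_X ^ ((j+1) choose 2) * qbinom m j) = G m 0"
proof -
  have "fps_X ^ ((m+1) choose 2) / qpoch m * P m = (fps_X ^ ((m+1) choose 2) * P m) / qpoch m"
    using unit_div_mult_swap[OF qpoch_unit, of "P m" "fps_X ^ ((m+1) choose 2)"]
    by (simp add: mult.commute)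
  also have "\<dots> = G m 0" using unit_eq_div1[OF qpoch_unit] G_closed by simp
  finally show ?thesis using qbin_thm[of m] by simp
qed


lemma len_wt: "okr c \<rho> \<Longrightarrow> length \<rho> \<le> wt \<rho>"
proof (induction \<rho> arbitrary: c)
  case (Cons x r)
  have "c < fst x" using okr_gt[OF Cons.prems] by simp
  moreover have "length r \<le> wt r" using Cons by auto
  ultimately show ?case by (simp add: wt_def)
qed (simp add: wt_def)

lemma S_empty: "n < i \<Longrightarrow> S i c n = {}"
  using len_wt by (fastforce simp: S_def)

lemma opw: "op_weight \<pi> = wt (rev \<pi>)"
  by (simp add: op_weight_def wt_def rev_map[symmetric] sum_list_rev)

lemma C1_card: "card {\<pi>\<in>C1. op_weight \<pi> = n} = (\<Sum>i\<le>n. card (S i 0 n))"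
proof -
  have eq: "{\<pi>\<in>C1. op_weight \<pi> = n} = rev ` (\<Union>i\<le>n. S i 0 n)"
  proof
    show "{\<pi>\<in>C1. op_weight \<pi> = n} \<subseteq> rev ` (\<Union>i\<le>n. S i 0 n)"
    proof
      fix \<pi> assume "\<pi> \<in> {\<pi>\<in>C1. op_weight \<pi> = n}"
      then have a: "okr 0 (rev \<pi>)" "wt (rev \<pi>) = n" using C1_okf okf_okr opw by auto
      then have "length (rev \<pi>) \<le> n" using len_wt by metis
      then have "rev \<pi> \<in> (\<Union>i\<le>n. S i 0 n)" using a by (auto simp: S_def)
      then show "\<pi> \<in> rev ` (\<Union>i\<le>n. S i 0 n)" by (intro image_eqI[of _ _ "rev \<pi>"]) auto
    qed
  next
    show "rev ` (\<Union>i\<le>n. S i 0 n) \<subseteq> {\<pi>\<in>C1. op_weight \<pi> = n}"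
      by (auto simp: S_def C1_okf okf_okr opw)
  qed
  have inj: "inj_on rev (\<Union>i\<le>n. S i 0 n)" by (rule inj_onI) simp
  have "card {\<pi>\<in>C1. op_weight \<pi> = n} = card (\<Union>i\<le>n. S i 0 n)"
    unfolding eq by (rule card_image[OF inj])
  also have "\<dots> = (\<Sum>i\<le>n. card (S i 0 n))"
    by (rule card_UN_disjoint) (auto simp: finite_S, auto simp: S_def)
  finally show ?thesis .
qed

theorem mainTheorem19:
  shows "(\<lambda>m. fps_X ^ ((m+1) choose 2) / qpoch m *
              (\<Sum>j\<le>m. fps_X ^ ((j+1) choose 2) * qbinom m j))
         sums (Abs_fps (\<lambda>n. of_nat (card {\<pi>\<in>C1. op_weight \<pi> = n})) :: rat fps)"
proof -
  have fe: "(\<lambda>m. fps_X ^ ((m+1) choose 2) / qpoch m *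
              (\<Sum>j\<le>m. fps_X ^ ((j+1) choose 2) * qbinom m j)) = (\<lambda>m. G m 0)"
    by (rule ext) (rule term_eq)
  have "(\<lambda>N. \<Sum>i<N. G i 0) \<longlonglongrightarrow> (Abs_fps (\<lambda>n. of_nat (card {\<pi>\<in>C1. op_weight \<pi> = n})) :: rat fps)"
  proof (rule tendsto_fpsI)
    fix k
    show "eventually (\<lambda>N. fps_nth (\<Sum>i<N. G i 0) k = fps_nth (Abs_fps (\<lambda>n. of_nat (card {\<pi>\<in>C1. op_weight \<pi> = n})) :: rat fps) k) sequentially"
    proof (rule eventually_sequentiallyI[of "Suc k"])
      fix N assume N: "Suc k \<le> N"
      have "fps_nth (\<Sum>i<N. G i 0) k = (\<Sum>i<N. of_nat (card (S i 0 k)))"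
        by (simp add: fps_sum_nth G_def)
      also have "\<dots> = (\<Sum>i\<le>k. of_nat (card (S i 0 k)))"
        by (rule sum.mono_neutral_right) (use N in \<open>auto simp: S_empty\<close>)
      also have "\<dots> = (of_nat (\<Sum>i\<le>k. card (S i 0 k)) :: rat)" by simp
      also have "\<dots> = fps_nth (Abs_fps (\<lambda>n. of_nat (card {\<pi>\<in>C1. op_weight \<pi> = n})) :: rat fps) k"
        by (simp add: C1_card)
      finally show "fps_nth (\<Sum>i<N. G i 0) k = fps_nth (Abs_fps (\<lambda>n. of_nat (card {\<pi>\<in>C1. op_weight \<pi> = n})) :: rat fps) k" .
    qed
  qed
  then show ?thesis unfolding fe sums_def .
qed

end
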